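(* Let $N\ge3$ and $p>0$. For each $1\le j\le N-1$ let $W^{(j)}$ be the unique solution in $L^2_c$ of $L_-W^{(j)}=U^{(j)}$. Then $$\langle U^{(j)},W^{(k)}\rangle_{L^2(\Gamma)}=0\ \ (j\ne k),\qquad \langle U^{(j)},W^{(j)}\rangle_{L^2(\Gamma)}>0 .$$ Moreover, the vectors $U^{(1)},\dots,U^{(N-1)}$ are pairwise orthogonal in $L^2(\Gamma)$, and so are the vectors $W^{(1)},\dots,W^{(N-1)}$.
   Context: Let $\Gamma$ be the star graph of $N$ half-lines joined at a single vertex, each edge parametrized by $x\in[0,\infty)$ with vertex at $x=0$. Functions are real-valued; $L^2(\Gamma)=\oplus_{j=1}^NL^2(\mathbb{R}^+)$ with $\langle F,G\rangle_{L^2(\Gamma)}=\sum_j\int_0^\infty f_jg_j\,dx$, and $H^2_\Gamma=\{\Psi\in\oplus_jH^2(\mathbb{R}^+):\psi_1(0)=\dots=\psi_N(0),\ \sum_j\psi_j'(0)=0\}$. Let $\phi(x)=\operatorname{sech}^{1/p}(px)$, $\Phi=\phi\,(1,\dots,1)^T$, $L^2_c=\{V\in L^2(\Gamma):\langle V,\Phi\rangle_{L^2(\Gamma)}=0\}$. $L_-=-\Delta+1-(p+1)\Phi^{2p}$ (componentwise) is self-adjoint on $L^2(\Gamma)$ with domain $H^2_\Gamma$, and its kernel is spanned by $\Phi$. For $k=1,\dots,N-1$ let $e_k\in\mathbb{R}^N$ have first $k$ entries $1$, $(k+1)$-th entry $-k$, other entries $0$, and $U^{(k)}=\phi'(x)e_k$;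 note $U^{(k)}\in L^2_c$. *)

theory Defs
  imports "HOL-Analysis.Analysis"
begin

text \<open>Functions on the star graph with N edges are represented as
  F :: nat \<Rightarrow> real \<Rightarrow> real, where F j (j < N) is the j-th component on [0,\<infinity>).
  Edges are indexed 0,...,N-1.\<close>

definition phi :: "real \<Rightarrow> real \<Rightarrow> real" where
  "phi p x = (1 / cosh (p * x)) powr (1 / p)"

definition Phi :: "real \<Rightarrow> nat \<Rightarrow> real \<Rightarrow> real" where
  "Phi p j x = phi p x"

definition evec :: "nat \<Rightarrow> nat \<Rightarrow> real" where
  "evec k i = (if i < k then 1 else if i = k then - real k else 0)"

definition U :: "real \<Rightarrow> nat \<Rightarrow> nat \<Rightarrow> real \<Rightarrow> real" where
  "U p k j x = deriv (phi p) x * evec k j"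

definition L2_half :: "(real \<Rightarrow> real) \<Rightarrow> bool" where
  "L2_half f \<longleftrightarrow> set_borel_measurable lborel {0..} f \<and>
      set_integrable lborel {0..} (\<lambda>x. (f x)^2)"

definition in_L2_Gamma :: "nat \<Rightarrow> (nat \<Rightarrow> real \<Rightarrow> real) \<Rightarrow> bool" where
  "in_L2_Gamma N F \<longleftrightarrow> (\<forall>j<N. L2_half (F j))"

definition ip_Gamma :: "nat \<Rightarrow> (nat \<Rightarrow> real \<Rightarrow> real) \<Rightarrow> (nat \<Rightarrow> real \<Rightarrow> real) \<Rightarrow> real" where
  "ip_Gamma N F G = (\<Sum>j<N. LINT x:{0..}|lborel. F j x * G j x)"

text \<open>H^2 on the half-line, with first derivative d1 and (weak) second derivative d2:
  f is C^1 on [0,\<infinity>) with derivative d1, d1 is absolutely continuous with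
  derivative d2 a.e., and f, d1, d2 are square integrable.\<close>
definition H2_half :: "(real \<Rightarrow> real) \<Rightarrow> (real \<Rightarrow> real) \<Rightarrow> (real \<Rightarrow> real) \<Rightarrow> bool" where
  "H2_half f d1 d2 \<longleftrightarrow> L2_half f \<and> L2_half d1 \<and> L2_half d2 \<and>
     (\<forall>x\<ge>0. (f has_real_derivative d1 x) (at x within {0..})) \<and>
     (\<forall>x\<ge>0. set_integrable lborel {0..x} d2 \<and> d1 x = d1 0 + (LBINT t=0..x. d2 t))"

definition Lminus_solves :: "real \<Rightarrow> nat \<Rightarrow> (nat \<Rightarrow> real \<Rightarrow> real) \<Rightarrow> (nat \<Rightarrow> real \<Rightarrow> real) \<Rightarrow> bool" where
  "Lminus_solves p N W F \<longleftrightarrow>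
     (\<exists>D1 D2 :: nat \<Rightarrow> real \<Rightarrow> real.
        (\<forall>j<N. H2_half (W j) (D1 j) (D2 j)) \<and>
        (\<forall>j<N. W j 0 = W 0 0) \<and>
        (\<Sum>j<N. D1 j 0) = 0 \<and>
        (\<forall>j<N. AE x in lborel. x \<ge> 0 \<longrightarrow>
            - D2 j x + W j x - (p + 1) * (phi p x) powr (2 * p) * W j x = F j x))"

end

theory Submission
  imports Defs
begin


lemma phi_alt: "phi p x = exp (- ln (cosh (p*x)) / p)"
proof -
  have "cosh (p*x) > 0" by simp
  then show ?thesis unfolding phi_def powr_def by (simp add: ln_div)
qed

definition dphi :: "real \<Rightarrow> real \<Rightarrow> real" where
  "dphi p x = - (sinh (p*x) / cosh (p*x)) * phi p x"

lemma phi_pos: "phi p x > 0" by (simp add: phi_alt)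

lemma phi_deriv:
  assumes "p > 0"
  shows "(phi p has_real_derivative dphi p x) (at x within S)"
proof -
  have c: "cosh (p*x) > 0" by simp
  have "((\<lambda>x. exp (- ln (cosh (p*x)) / p)) has_real_derivative
        exp (- ln (cosh (p*x)) / p) * (- (1/cosh (p*x) * (sinh (p*x) * p)) / p)) (at x within S)"
    using c by (auto intro!: derivative_eq_intros)
  moreover have "exp (- ln (cosh (p*x)) / p) * (- (1/cosh (p*x) * (sinh (p*x) * p)) / p) = dphi p x"
    using assms c by (simp add: dphi_def phi_alt field_simps)
  ultimately show ?thesis by (simp add: phi_alt[abs_def])
qed

lemma deriv_phi: "p > 0 \<Longrightarrow> deriv (phi p) x = dphi p x"
  using phi_deriv[of p x UNIV] by (simp add: DERIV_imp_deriv)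

lemma phi_powr: "p > 0 \<Longrightarrow> phi p x powr (2*p) = 1 / (cosh (p*x))^2"
proof -
  assume p: "p > 0"
  have "phi p x powr (2*p) = exp (2*p * ln (phi p x))" using phi_pos[of p x] by (simp add: powr_def)
  also have "\<dots> = exp (- 2 * ln (cosh (p*x)))" using p by (simp add: phi_alt)
  also have "\<dots> = 1 / (cosh (p*x))^2"
  proof -
    have "exp (2 * ln (cosh (p*x))) = (cosh (p*x))^2"
    proof -
      have "ln ((cosh (p*x))^2) = 2 * ln (cosh (p*x))" by (simp add: ln_realpow)
      then show ?thesis by (metis cosh_real_pos exp_ln zero_less_power)
    qed
    then show ?thesis by (simp add: exp_minus inverse_eq_divide)
  qed
  finally show ?thesis .
qed

definition V :: "real \<Rightarrow> real \<Rightarrow> real" where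
  "V p x = 1 - (p+1) * phi p x powr (2*p)"

definition ddphi :: "real \<Rightarrow> real \<Rightarrow> real" where
  "ddphi p x = V p x * phi p x"

lemma aux_alg: fixes c t p f :: real assumes "c > 0" "c*c = 1 + t*t" shows
  "- ((c*p*c - t*(t*p)) * f / (c*c)) - (-(t/c)*f) * t / c = (1 - (p+1)*(1/c^2)) * f"
proof -
  have "c \<noteq> 0" using assms(1) by simp
  then show ?thesis apply (simp add: field_simps power2_eq_square)
    using assms(2) by algebra
qed

lemma dphi_deriv:
  assumes "p > 0"
  shows "(dphi p has_real_derivative ddphi p x) (at x within S)"
  unfolding dphi_def[abs_def]
apply (rule derivative_eq_intros refl phi_deriv[OF assms] | simp)+
  unfolding ddphi_def V_def phi_powr[OF assms] dphi_def
  apply (rule aux_alg)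
   apply simp
  using cosh_square_eq[of "p*x"] by (simp add: power2_eq_square algebra_simps)


lemma phi_cont: "p > 0 \<Longrightarrow> continuous_on S (phi p)"
  by (meson DERIV_continuous continuous_at_imp_continuous_on phi_deriv)

lemma dphi_cont: "p > 0 \<Longrightarrow> continuous_on S (dphi p)"
  by (meson DERIV_continuous continuous_at_imp_continuous_on dphi_deriv)

lemma phi_le1: "p > 0 \<Longrightarrow> phi p x \<le> 1"
proof -
  assume p: "p > 0"
  have "ln (cosh (p*x)) \<ge> 0" using cosh_real_ge_1 by simp
  then have "- ln (cosh (p*x)) / p \<le> 0" using p by (simp add: divide_nonpos_pos)
  then show ?thesis by (simp add: phi_alt)
qed

lemma abs_dphi: "p > 0 \<Longrightarrow> \<bar>dphi p x\<bar> \<le> phi p x"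
proof -
  assume p: "p > 0"
  have "\<bar>sinh (p*x)\<bar> \<le> cosh (p*x)" using sinh_le_cosh_real[of "p*x"] sinh_le_cosh_real[of "-(p*x)"] by (simp add: abs_le_iff)
  then have "\<bar>sinh (p*x) / cosh (p*x)\<bar> \<le> 1" by (simp add: abs_divide divide_le_eq_1)
  then have "\<bar>sinh (p*x) / cosh (p*x)\<bar> * phi p x \<le> 1 * phi p x"
    using phi_pos[of p x] by (intro mult_right_mono) auto
  then show ?thesis using phi_pos[of p x] unfolding dphi_def abs_mult abs_minus by simp
qed

lemma phi_decay: assumes p: "p > 0" and x: "x \<ge> 0" shows "phi p x \<le> exp (ln 2 / p) * exp (-x)"
proof -
  have "exp (p*x) / 2 \<le> cosh (p*x)" unfolding cosh_def by (simp add: divide_right_mono)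
  then have "ln (exp (p*x) / 2) \<le> ln (cosh (p*x))" by (subst ln_le_cancel_iff) auto
  then have "p*x - ln 2 \<le> ln (cosh (p*x))" by (simp add: ln_div)
  then have "- ln (cosh (p*x)) / p \<le> ln 2 / p + (-x)" using p by (simp add: field_simps)
  then have "phi p x \<le> exp (ln 2 / p + (-x))" by (simp add: phi_alt)
  then show ?thesis by (simp add: exp_add[symmetric])
qed

lemma cont_meas: "continuous_on UNIV f \<Longrightarrow> (f::real\<Rightarrow>real) \<in> borel_measurable lborel"
  by (simp add: borel_measurable_continuous_onI)

lemma exp_int: "set_integrable lborel {0::real..} (\<lambda>x. exp (-x))"
proof -
  have "(\<lambda>x::real. exp (-1*x)) absolutely_integrable_on {0..}"
    by (intro nonnegative_absolutely_integrable_1 integrable_on_exp_minus_to_infinity) auto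
  then have "set_integrable lebesgue {0::real..} (\<lambda>x. exp (-x))" by simp
  then show ?thesis unfolding set_integrable_def
    by (subst (asm) integrable_completion) (auto intro!: borel_measurable_continuous_on_indicator continuous_intros)
qed

lemma decay_int:
  fixes g :: "real \<Rightarrow> real"
  assumes "continuous_on UNIV g" "\<And>x. x \<ge> 0 \<Longrightarrow> \<bar>g x\<bar> \<le> C * exp (-x)"
  shows "set_integrable lborel {0..} g"
proof (rule set_integrable_bound)
  show "set_integrable lborel {0..} (\<lambda>x. C * exp (-x))"
    using exp_int by (rule set_integrable_mult_right)
  have "g \<in> borel_measurable lborel" using assms(1) by (rule cont_meas)
  then show "set_borel_measurable lborel {0..} g" unfolding set_borel_measurable_def by measurable
  show "AE x in lborel. x \<in> {0..} \<longrightarrow> norm (g x) \<le> norm (C * exp (-x))"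
    using assms(2) by (auto intro!: AE_I2) (smt (verit, best) real_norm_def)
qed

lemma poly_exp: assumes "x \<ge> (0::real)" shows "(1+x)^2 \<le> 4 * exp x"
proof -
  have "1 + x/2 \<le> exp (x/2)" by (rule exp_ge_add_one_self)
  then have "(1 + x/2)^2 \<le> (exp (x/2))^2" using assms by (intro power_mono) auto
  also have "(exp (x/2))^2 = exp x" by (simp add: exp_double[symmetric] power2_eq_square exp_add[symmetric])
  finally have "(1 + x/2)^2 \<le> exp x" .
  moreover have "(1+x)^2 \<le> 4 * (1 + x/2)^2" using assms by (simp add: power2_eq_square field_simps)
  ultimately show ?thesis by linarith
qed

lemma B_bound: assumes p: "p > 0" and x: "x \<ge> 0"
  shows "(1+x)^2 * (phi p x)^2 \<le> 4 * (exp (ln 2 / p))^2 * exp (-x)"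
proof -
  let ?K = "exp (ln 2 / p)"
  have "phi p x \<le> ?K * exp (-x)" by (rule phi_decay[OF p x])
  then have "(phi p x)^2 \<le> (?K * exp (-x))^2" using phi_pos[of p x] by (intro power_mono) auto
  then have h1: "(phi p x)^2 \<le> ?K^2 * exp (-x) * exp (-x)" by (simp add: power2_eq_square mult_ac)
  have h2: "(1+x)^2 \<le> 4 * exp x" by (rule poly_exp[OF x])
  have "(1+x)^2 * (phi p x)^2 \<le> (4 * exp x) * (?K^2 * exp (-x) * exp (-x))"
    using h1 h2 by (intro mult_mono) auto
  also have "\<dots> = 4 * ?K^2 * exp (-x)" by (simp add: exp_minus field_simps)
  finally show ?thesis .
qed



lemma V_alt: "p > 0 \<Longrightarrow> V p x = 1 - (p+1) / (cosh (p*x))^2"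
  by (simp add: V_def phi_powr)

lemma V_cont: "p > 0 \<Longrightarrow> continuous_on S (V p)"
proof -
  assume p: "p > 0"
  have "continuous_on S (\<lambda>x. 1 - (p+1) / (cosh (p*x))^2)"
    by (intro continuous_intros) auto
  then show ?thesis using V_alt[OF p] by (simp add: fun_eq_iff[symmetric])
qed

lemma V_bound: "p > 0 \<Longrightarrow> \<bar>V p x\<bar> \<le> p + 2"
proof -
  assume p: "p > 0"
  have c: "(cosh (p*x))^2 \<ge> 1" using cosh_real_ge_1[of "p*x"] by (simp add: one_le_power)
  then have "(p+1) / (cosh (p*x))^2 \<le> p+1" using p by (simp add: divide_le_eq)
  moreover have "(p+1) / (cosh (p*x))^2 \<ge> 0" using p by simp
  ultimately show ?thesis using V_alt[OF p, of x] by (simp add: abs_le_iff)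
qed

definition psi :: "real \<Rightarrow> real \<Rightarrow> real" where
  "psi p x = - x * phi p x / 2"
definition dpsi :: "real \<Rightarrow> real \<Rightarrow> real" where
  "dpsi p x = - phi p x / 2 - x * dphi p x / 2"
definition ddpsi :: "real \<Rightarrow> real \<Rightarrow> real" where
  "ddpsi p x = V p x * psi p x - dphi p x"

lemma psi_deriv: "p > 0 \<Longrightarrow> (psi p has_real_derivative dpsi p x) (at x within S)"
  unfolding psi_def[abs_def]
  by (rule derivative_eq_intros refl phi_deriv | simp)+ (simp add: dpsi_def field_simps)

lemma dpsi_deriv: "p > 0 \<Longrightarrow> (dpsi p has_real_derivative ddpsi p x) (at x within S)"
  unfolding dpsi_def[abs_def]
  by (rule derivative_eq_intros refl phi_deriv dphi_deriv | simp)+ (simp add: ddpsi_def psi_def ddphi_def field_simps)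

lemma psi_cont: "p > 0 \<Longrightarrow> continuous_on S (psi p)"
  by (meson DERIV_continuous continuous_at_imp_continuous_on psi_deriv)
lemma dpsi_cont: "p > 0 \<Longrightarrow> continuous_on S (dpsi p)"
  by (meson DERIV_continuous continuous_at_imp_continuous_on dpsi_deriv)
lemma ddpsi_cont: "p > 0 \<Longrightarrow> continuous_on S (ddpsi p)"
  unfolding ddpsi_def by (intro continuous_intros V_cont psi_cont dphi_cont)

lemma q1: "0 \<le> (x::real) \<Longrightarrow> x/2 \<le> (1+x)^2"
proof -
  assume x: "0 \<le> x"
  have "(1+x)^2 = 1 + 2*x + x^2" by (simp add: power2_eq_square algebra_simps)
  moreover have "x^2 \<ge> 0" by simp
  ultimately show ?thesis using x by linarith
qed

lemma q2: "0 \<le> (x::real) \<Longrightarrow> x^2/4 \<le> (1+x)^2"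
proof -
  assume x: "0 \<le> x"
  have "(1+x)^2 = 1 + 2*x + x^2" by (simp add: power2_eq_square algebra_simps)
  moreover have "x^2 \<ge> 0" by simp
  ultimately show ?thesis using x by linarith
qed

lemma B_int:
  assumes p: "p > 0" and g: "continuous_on UNIV g"
    and b: "\<And>x. x \<ge> 0 \<Longrightarrow> \<bar>g x\<bar> \<le> (1+x)^2 * (phi p x)^2"
  shows "set_integrable lborel {0..} g"
  by (rule decay_int[OF g, of "4 * (exp (ln 2 / p))^2"]) (meson B_bound[OF p] b order_trans)

lemma int_phi2: "p > 0 \<Longrightarrow> set_integrable lborel {0..} (\<lambda>x. phi p x * phi p x)"
proof (rule B_int)
  fix x :: real assume "p > 0" "x \<ge> 0"
  then have "1 * (phi p x)^2 \<le> (1+x)^2 * (phi p x)^2" by (intro mult_right_mono) (auto simp: one_le_power)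
  then show "\<bar>phi p x * phi p x\<bar> \<le> (1+x)^2 * (phi p x)^2" by (simp add: power2_eq_square)
qed (auto intro!: continuous_intros phi_cont)

lemma int_psiphi: "p > 0 \<Longrightarrow> set_integrable lborel {0..} (\<lambda>x. psi p x * phi p x)"
proof (rule B_int)
  fix x :: real assume "p > 0" "x \<ge> 0"
  then have "x/2 * (phi p x)^2 \<le> (1+x)^2 * (phi p x)^2" by (intro mult_right_mono q1) auto
  then show "\<bar>psi p x * phi p x\<bar> \<le> (1+x)^2 * (phi p x)^2" using \<open>x \<ge> 0\<close> phi_pos[of p x]
    by (simp add: psi_def power2_eq_square abs_mult)
qed (auto intro!: continuous_intros phi_cont psi_cont)

lemma int_psi2: "p > 0 \<Longrightarrow> set_integrable lborel {0..} (\<lambda>x. (psi p x)^2)"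
proof (rule B_int)
  fix x :: real assume "p > 0" "x \<ge> 0"
  then have "x^2/4 * (phi p x)^2 \<le> (1+x)^2 * (phi p x)^2" by (intro mult_right_mono q2) auto
  moreover have "\<bar>(psi p x)^2\<bar> = x^2/4 * (phi p x)^2"
    by (simp add: psi_def power_mult_distrib power_divide)
  ultimately show "\<bar>(psi p x)^2\<bar> \<le> (1+x)^2 * (phi p x)^2" by simp
qed (auto intro!: continuous_intros phi_cont psi_cont)

lemma int_dphipsi: "p > 0 \<Longrightarrow> set_integrable lborel {0..} (\<lambda>x. dphi p x * psi p x)"
proof (rule B_int)
  fix x :: real assume p: "p > 0" and x: "x \<ge> 0"
  have "\<bar>dphi p x * psi p x\<bar> = \<bar>dphi p x\<bar> * (x/2 * phi p x)"
    using x phi_pos[of p x] by (simp add: psi_def abs_mult)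
  also have "\<dots> \<le> phi p x * (x/2 * phi p x)"
    using x phi_pos[of p x] abs_dphi[OF p, of x] by (intro mult_right_mono) auto
  also have "\<dots> = x/2 * (phi p x)^2" by (simp add: power2_eq_square)
  also have "\<dots> \<le> (1+x)^2 * (phi p x)^2" using x by (intro mult_right_mono q1) auto
  finally show "\<bar>dphi p x * psi p x\<bar> \<le> (1+x)^2 * (phi p x)^2" .
qed (auto intro!: continuous_intros dphi_cont psi_cont)

lemma int_dpsi2: "p > 0 \<Longrightarrow> set_integrable lborel {0..} (\<lambda>x. (dpsi p x)^2)"
proof (rule B_int)
  fix x :: real assume p: "p > 0" and x: "x \<ge> 0"
  have "\<bar>dpsi p x\<bar> \<le> \<bar>- phi p x / 2\<bar> + \<bar>x * dphi p x / 2\<bar>"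
    unfolding dpsi_def by (rule abs_triangle_ineq4)
  also have "\<dots> = phi p x / 2 + x * \<bar>dphi p x\<bar> / 2"
    using x phi_pos[of p x] by (simp add: abs_mult)
  also have "\<dots> \<le> phi p x / 2 + x * phi p x / 2"
    using x abs_dphi[OF p, of x] by (simp add: divide_right_mono mult_left_mono)
  also have "\<dots> = (1+x) * phi p x / 2" by (simp add: field_simps)
  finally have h: "\<bar>dpsi p x\<bar> \<le> (1+x) * phi p x / 2" .
  have "(dpsi p x)^2 = \<bar>dpsi p x\<bar>^2" by simp
  also have "\<dots> \<le> ((1+x) * phi p x / 2)^2" using h by (intro power_mono) auto
  also have "\<dots> = (1+x)^2 * (phi p x)^2 / 4" by (simp add: power2_eq_square)
  also have "\<dots> \<le> (1+x)^2 * (phi p x)^2" by simp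
  finally show "\<bar>(dpsi p x)^2\<bar> \<le> (1+x)^2 * (phi p x)^2" by simp
qed (auto intro!: continuous_intros dpsi_cont)

lemma H2_classical:
  fixes f d1 d2 g :: "real \<Rightarrow> real"
  assumes H: "\<forall>x\<ge>0. set_integrable lborel {0..x} d2 \<and> d1 x = d1 0 + (LBINT t=0..x. d2 t)"
    and ae: "AE x in lborel. x \<ge> 0 \<longrightarrow> d2 x = g x"
    and gc: "continuous_on {0..} g"
    and x: "x \<in> {0..b}"
  shows "(d1 has_real_derivative g x) (at x within {0..b})"
proof -
  have eq: "d1 u = d1 0 + (LBINT t=0..u. g t)" if u: "u \<in> {0..b}" for u
  proof -
    have u0: "0 \<le> u" using u by simp
    have i1: "set_integrable lborel {0..u} d2" using H u0 by blast
    have gcu: "continuous_on {0..u} g" using gc by (rule continuous_on_subset) auto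
    have i2: "set_integrable lborel {0..u} g" by (rule borel_integrable_atLeastAtMost'[OF gcu])
    have m1: "(\<lambda>t. indicator {0..u} t *\<^sub>R d2 t) \<in> borel_measurable lborel"
      using i1 unfolding set_integrable_def by (rule borel_measurable_integrable)
    have m2: "(\<lambda>t. indicator {0..u} t *\<^sub>R g t) \<in> borel_measurable lborel"
      using i2 unfolding set_integrable_def by (rule borel_measurable_integrable)
    have "(LINT t:{0..u}|lborel. d2 t) = (LINT t:{0..u}|lborel. g t)"
      unfolding set_lebesgue_integral_def
      by (rule integral_cong_AE[OF m1 m2]) (use ae in \<open>eventually_elim, auto split: split_indicator\<close>)
    then have "(LBINT t=0..u. d2 t) = (LBINT t=0..u. g t)"
      using interval_integral_Icc[OF u0, of d2] interval_integral_Icc[OF u0, of g] by (simp only: zero_ereal_def)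
    moreover have "d1 u = d1 0 + (LBINT t=0..u. d2 t)" using H u0 by blast
    ultimately show ?thesis by simp
  qed
  have gcb: "continuous_on {0..b} g" using gc by (rule continuous_on_subset) auto
  have "((\<lambda>u. LBINT y=ereal 0..ereal u. g y) has_vector_derivative g x) (at x within {0..b})"
    using x by (intro interval_integral_FTC2[OF _ _ gcb]) auto
  then have "((\<lambda>u. LBINT y=0..u. g y) has_vector_derivative g x) (at x within {0..b})"
    by (simp only: zero_ereal_def)
  then have A: "((\<lambda>u. LBINT y=0..u. g y) has_real_derivative g x) (at x within {0..b})"
    by (simp add: has_real_derivative_iff_has_vector_derivative)
  have "((\<lambda>u. d1 0 + (LBINT y=0..u. g y)) has_real_derivative 0 + g x) (at x within {0..b})"
    by (rule DERIV_add[OF DERIV_const A])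
  then have "((\<lambda>u. d1 0 + (LBINT y=0..u. g y)) has_real_derivative g x) (at x within {0..b})"
    by simp
  then show ?thesis
    by (rule has_field_derivative_transform_within[OF _ zero_less_one x]) (metis eq)
qed



lemma const_L2_zero:
  assumes i: "set_integrable lborel {0::real..} (\<lambda>x. c::real)"
  shows "c = 0"
proof (rule ccontr)
  assume c: "c \<noteq> 0"
  have "integrable lborel (\<lambda>x. c * indicator {0::real..} x)"
    using i by (simp add: set_integrable_def mult.commute)
  then have "integrable lborel (indicator {0::real..} :: real \<Rightarrow> real)" using c by simp
  then have "emeasure lborel {0::real..} < \<infinity>" by (simp add: integrable_indicator_iff)
  then obtain r where r: "r \<ge> 0" "emeasure lborel {0::real..} = ennreal r"
    using less_top_ennreal by (metis infinity_ennreal_def)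
  have "emeasure lborel {0..r+1} \<le> emeasure lborel {0::real..}" by (rule emeasure_mono) auto
  then have "ennreal (r+1) \<le> ennreal r" using r by simp
  then show False using r by simp
qed

lemma phi0: "phi p 0 = 1" by (simp add: phi_alt)

lemma set_meas_mult_cont:
  assumes "set_borel_measurable lborel S f" "continuous_on UNIV (a::real\<Rightarrow>real)"
  shows "set_borel_measurable lborel S (\<lambda>x. f x * a x)"
proof -
  have am: "a \<in> borel_measurable lborel" using assms(2) by (rule cont_meas)
  have "(\<lambda>x. indicator S x *\<^sub>R (f x * a x)) = (\<lambda>x. (indicator S x *\<^sub>R f x) * a x)"
    by (auto split: split_indicator)
  moreover have "(\<lambda>x. (indicator S x *\<^sub>R f x) * a x) \<in> borel_measurable lborel"
    using assms(1) am unfolding set_borel_measurable_def by measurable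
  ultimately show ?thesis unfolding set_borel_measurable_def by simp
qed

lemma set_meas_diff:
  assumes "set_borel_measurable lborel S f" "set_borel_measurable lborel S (g::real\<Rightarrow>real)"
  shows "set_borel_measurable lborel S (\<lambda>x. f x - g x)"
proof -
  have "(\<lambda>x. indicator S x *\<^sub>R (f x - g x)) = (\<lambda>x. (indicator S x *\<^sub>R f x) - (indicator S x *\<^sub>R g x))"
    by (auto split: split_indicator)
  moreover have "(\<lambda>x. (indicator S x *\<^sub>R f x) - (indicator S x *\<^sub>R g x)) \<in> borel_measurable lborel"
    using assms unfolding set_borel_measurable_def by measurable
  ultimately show ?thesis unfolding set_borel_measurable_def by simp
qed

lemma set_meas_sq:
  assumes "set_borel_measurable lborel S (f::real\<Rightarrow>real)"
  shows "set_borel_measurable lborel S (\<lambda>x. (f x)^2)"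
proof -
  have "(\<lambda>x. indicator S x *\<^sub>R (f x)^2) = (\<lambda>x. (indicator S x *\<^sub>R f x)^2)"
    by (auto split: split_indicator)
  moreover have "(\<lambda>x. (indicator S x *\<^sub>R f x)^2) \<in> borel_measurable lborel"
    using assms unfolding set_borel_measurable_def by measurable
  ultimately show ?thesis unfolding set_borel_measurable_def by simp
qed

lemma cont_set_meas: "continuous_on UNIV (a::real\<Rightarrow>real) \<Longrightarrow> set_borel_measurable lborel {0..} a"
proof -
  assume c: "continuous_on UNIV a"
  have am: "a \<in> borel_measurable lborel" using c by (rule cont_meas)
  show "set_borel_measurable lborel {0..} a"
    unfolding set_borel_measurable_def by (intro borel_measurable_scaleR borel_measurable_indicator am) auto
qed

lemma comb_L2:
  fixes f g a b :: "real \<Rightarrow> real"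
  assumes mf: "set_borel_measurable lborel {0..} f" and mg: "set_borel_measurable lborel {0..} g"
    and f2: "set_integrable lborel {0..} (\<lambda>x. (f x)^2)" and g2: "set_integrable lborel {0..} (\<lambda>x. (g x)^2)"
    and ca: "continuous_on UNIV a" and cb: "continuous_on UNIV b"
    and ba: "\<And>x. \<bar>a x\<bar> \<le> A" and bb: "\<And>x. \<bar>b x\<bar> \<le> B"
  shows "set_integrable lborel {0..} (\<lambda>x. (f x * a x - g x * b x)^2)"
proof (rule set_integrable_bound)
  show "set_integrable lborel {0..} (\<lambda>x. 2 * A^2 * (f x)^2 + 2 * B^2 * (g x)^2)"
    by (intro set_integral_add(1) set_integrable_mult_right f2 g2)
  show "set_borel_measurable lborel {0..} (\<lambda>x. (f x * a x - g x * b x)^2)"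
    by (intro set_meas_sq set_meas_diff set_meas_mult_cont mf mg ca cb)
  show "AE x in lborel. x \<in> {0..} \<longrightarrow> norm ((f x * a x - g x * b x)^2) \<le> norm (2 * A^2 * (f x)^2 + 2 * B^2 * (g x)^2)"
  proof (intro AE_I2 impI)
    fix x :: real
    have "(f x * a x - g x * b x)^2 = 2 * (f x * a x)^2 + 2 * (g x * b x)^2 - (f x * a x + g x * b x)^2"
      by (simp add: power2_eq_square algebra_simps)
    moreover have "(f x * a x + g x * b x)^2 \<ge> 0" by simp
    ultimately have "(f x * a x - g x * b x)^2 \<le> 2 * (f x * a x)^2 + 2 * (g x * b x)^2" by linarith
    have a2: "(a x)^2 \<le> A^2" using ba[of x] by (metis abs_le_square_iff abs_of_nonneg abs_ge_zero order_trans abs_le_D1 power2_abs)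
    have b2: "(b x)^2 \<le> B^2" using bb[of x] by (metis abs_le_square_iff abs_of_nonneg abs_ge_zero order_trans abs_le_D1 power2_abs)
    have e1: "(f x * a x)^2 \<le> A^2 * (f x)^2"
    proof -
      have "(f x * a x)^2 = (a x)^2 * (f x)^2" by (simp add: power_mult_distrib)
      also have "\<dots> \<le> A^2 * (f x)^2" using a2 by (intro mult_right_mono) auto
      finally show ?thesis .
    qed
    have e2: "(g x * b x)^2 \<le> B^2 * (g x)^2"
    proof -
      have "(g x * b x)^2 = (b x)^2 * (g x)^2" by (simp add: power_mult_distrib)
      also have "\<dots> \<le> B^2 * (g x)^2" using b2 by (intro mult_right_mono) auto
      finally show ?thesis .
    qed
    have "(f x * a x - g x * b x)^2 \<le> 2 * A^2 * (f x)^2 + 2 * B^2 * (g x)^2"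
      using e1 e2 \<open>(f x * a x - g x * b x)^2 \<le> 2 * (f x * a x)^2 + 2 * (g x * b x)^2\<close> by linarith
    then show "norm ((f x * a x - g x * b x)^2) \<le> norm (2 * A^2 * (f x)^2 + 2 * B^2 * (g x)^2)"
      by simp
  qed
qed

lemma kernel:
  fixes d d1 :: "real \<Rightarrow> real"
  assumes p: "p > 0"
    and dd: "\<forall>x\<ge>0. (d has_real_derivative d1 x) (at x within {0..})"
    and d1d: "\<And>b x. x \<in> {0..b} \<Longrightarrow> (d1 has_real_derivative V p x * d x) (at x within {0..b})"
    and md: "set_borel_measurable lborel {0..} d" and md1: "set_borel_measurable lborel {0..} d1"
    and d2: "set_integrable lborel {0..} (\<lambda>x. (d x)^2)" and d12: "set_integrable lborel {0..} (\<lambda>x. (d1 x)^2)"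
    and x: "x \<ge> 0"
  shows "d x = d 0 * phi p x"
proof -
  define w where "w x = d x * dphi p x - d1 x * phi p x" for x
  have wder: "(w has_real_derivative 0) (at y within {0..b})" if y: "y \<in> {0..b}" for y b
  proof -
    have h1: "(d has_real_derivative d1 y) (at y within {0..b})"
      using dd y by (auto intro: DERIV_subset)
    have "(w has_real_derivative d1 y * dphi p y + ddphi p y * d y - (V p y * d y * phi p y + dphi p y * d1 y)) (at y within {0..b})"
      unfolding w_def[abs_def]
      by (rule DERIV_diff[OF DERIV_mult[OF h1 dphi_deriv[OF p]] DERIV_mult[OF d1d[OF y] phi_deriv[OF p]]])
    moreover have "d1 y * dphi p y + ddphi p y * d y - (V p y * d y * phi p y + dphi p y * d1 y) = 0"
      by (simp add: ddphi_def algebra_simps)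
    ultimately show ?thesis by simp
  qed
  have wconst: "w y = w 0" if y: "y \<ge> 0" for y
  proof -
    have "\<exists>c. \<forall>z\<in>{0..y}. w z = c"
      by (rule has_field_derivative_zero_constant) (auto intro: wder)
    then obtain c where "\<forall>z\<in>{0..y}. w z = c" by blast
    then show ?thesis using y by auto
  qed
  have b1: "\<bar>dphi p z\<bar> \<le> 1" for z using abs_dphi[OF p, of z] phi_le1[OF p, of z] by linarith
  have b2: "\<bar>phi p z\<bar> \<le> 1" for z using phi_pos[of p z] phi_le1[OF p, of z] by simp
  have "set_integrable lborel {0..} (\<lambda>x. (d x * dphi p x - d1 x * phi p x)^2)"
    by (rule comb_L2[OF md md1 d2 d12 dphi_cont[OF p] phi_cont[OF p] b1 b2])
  moreover have "(\<lambda>x. indicator {0..} x *\<^sub>R (d x * dphi p x - d1 x * phi p x)^2) = (\<lambda>x::real. indicator {0..} x *\<^sub>R (w 0)^2 :: real)"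
  proof
    fix x :: real
    show "indicator {0..} x *\<^sub>R (d x * dphi p x - d1 x * phi p x)^2 = indicator {0..} x *\<^sub>R (w 0)^2"
      using wconst[of x] unfolding w_def by (auto split: split_indicator)
  qed
  ultimately have "set_integrable lborel {0..} (\<lambda>x::real. (w 0)^2)" unfolding set_integrable_def by simp
  then have "(w 0)^2 = 0" by (rule const_L2_zero)
  then have w0: "w 0 = 0" by simp
  define q where "q y = d y / phi p y" for y
  have qder: "(q has_real_derivative 0) (at y within {0..})" if y: "y \<in> {0..}" for y
  proof -
    have "(q has_real_derivative (d1 y * phi p y - d y * dphi p y) / (phi p y * phi p y)) (at y within {0..})"
      unfolding q_def[abs_def] using dd y phi_pos[of p y]
      by (intro DERIV_divide phi_deriv[OF p]) auto
    moreover have "d1 y * phi p y - d y * dphi p y = 0"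
      using wconst[of y] w0 y unfolding w_def by simp
    ultimately show ?thesis by simp
  qed
  have "\<exists>c. \<forall>z\<in>{0..}. q z = c"
    by (rule has_field_derivative_zero_constant) (auto intro: qder)
  then obtain c where c: "\<forall>z\<in>{0..}. q z = c" by blast
  then have "q x = q 0" using x by auto
  then show ?thesis using phi_pos[of p x] unfolding q_def phi0 by (simp add: field_simps)
qed

lemma sum_lt: "k \<le> N \<Longrightarrow> (\<Sum>i<N. (if i < k then 1 else 0) :: real) = real k"
proof -
  assume k: "k \<le> N"
  have "(\<Sum>i<N. (if i < k then 1 else 0) :: real) = (\<Sum>i\<in>{..<N} \<inter> {i. i < k}. 1)"
    by (simp add: sum.If_cases)
  also have "{..<N} \<inter> {i. i < k} = {..<k}" using k by auto
  finally show ?thesis by simp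
qed

lemma evec_sum: assumes "k < N" shows "(\<Sum>i<N. evec k i) = 0"
proof -
  have "(\<Sum>i<N. evec k i) = (\<Sum>i<N. (if i < k then 1 else 0) + (if i = k then - real k else 0))"
    by (rule sum.cong) (auto simp: evec_def)
  also have "\<dots> = real k - real k"
    using assms by (simp add: sum.distrib sum_lt)
  finally show ?thesis by simp
qed

lemma evec_prod_lt: assumes "j < k" "k < N"
  shows "(\<Sum>i<N. evec j i * evec k i) = 0"
proof -
  have "(\<Sum>i<N. evec j i * evec k i) = (\<Sum>i<N. (if i < j then 1 else 0) + (if i = j then - real j else 0))"
    by (rule sum.cong) (use assms in \<open>auto simp: evec_def\<close>)
  also have "\<dots> = real j - real j"
    using assms by (simp add: sum.distrib sum_lt)
  finally show ?thesis by simp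
qed

lemma evec_prod_ne: assumes "j \<noteq> k" "j < N" "k < N"
  shows "(\<Sum>i<N. evec j i * evec k i) = 0"
proof (cases "j < k")
  case True then show ?thesis using evec_prod_lt assms by blast
next
  case False
  then have "k < j" using assms by simp
  then have "(\<Sum>i<N. evec k i * evec j i) = 0" using evec_prod_lt assms by blast
  then show ?thesis by (simp add: mult.commute)
qed

lemma evec_prod_eq: assumes "k < N" "k \<ge> 1"
  shows "(\<Sum>i<N. evec k i * evec k i) > 0"
proof -
  have "(\<Sum>i<N. evec k i * evec k i) = (\<Sum>i<N. (if i < k then 1 else 0) + (if i = k then real k * real k else 0))"
    by (rule sum.cong) (use assms in \<open>auto simp: evec_def\<close>)
  also have "\<dots> = real k + real k * real k"
    using assms by (simp add: sum.distrib sum_lt)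
  moreover have "real k * real k \<ge> 0" by simp
  moreover have "real k > 0" using assms by simp
  ultimately show ?thesis by linarith
qed

lemma pos_int:
  fixes f :: "real \<Rightarrow> real"
  assumes i: "set_integrable lborel {0..} f" and nn: "\<And>x. x \<ge> 0 \<Longrightarrow> f x \<ge> 0"
    and pos: "\<And>x. x > 0 \<Longrightarrow> f x > 0"
  shows "(LINT x:{0..}|lborel. f x) > 0"
proof -
  let ?h = "\<lambda>x. indicator {0..} x *\<^sub>R f x"
  have ih: "integrable lborel ?h" using i by (simp add: set_integrable_def)
  have hnn: "AE x in lborel. 0 \<le> ?h x" using nn by (auto split: split_indicator)
  have ge: "integral\<^sup>L lborel ?h \<ge> 0" by (rule integral_nonneg_AE[OF hnn])
  have "integral\<^sup>L lborel ?h \<noteq> 0"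
  proof
    assume "integral\<^sup>L lborel ?h = 0"
    then have "AE x in lborel. ?h x = 0" using integral_nonneg_eq_0_iff_AE[OF ih hnn] by simp
    then have "AE x in lborel. x \<notin> {0<..<1::real}"
      by eventually_elim (use pos in \<open>fastforce split: split_indicator\<close>)
    then have "emeasure lborel {0<..<1::real} = 0"
      by (subst (asm) AE_iff_measurable[of "{0<..<1}"]) auto
    then show False by simp
  qed
  then show ?thesis using ge unfolding set_lebesgue_integral_def by simp
qed



lemma sint_cong: "(\<And>x. x \<ge> 0 \<Longrightarrow> f x = g x) \<Longrightarrow> (LINT x:{0::real..}|lborel. f x) = (LINT x:{0..}|lborel. g x)"
  unfolding set_lebesgue_integral_def
  by (rule Bochner_Integration.integral_cong) (auto split: split_indicator)

lemma ip_form: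
  assumes "\<And>i x. i < N \<Longrightarrow> x \<ge> 0 \<Longrightarrow> F i x * G i x = a i * h x"
  shows "ip_Gamma N F G = (\<Sum>i<N. a i) * (LINT x:{0..}|lborel. h x)"
proof -
  have "ip_Gamma N F G = (\<Sum>i<N. a i * (LINT x:{0..}|lborel. h x))"
    unfolding ip_Gamma_def
  proof (rule sum.cong[OF refl])
    fix i assume "i \<in> {..<N}"
    then have "(LINT x:{0..}|lborel. F i x * G i x) = (LINT x:{0..}|lborel. a i * h x)"
      using assms by (intro sint_cong) auto
    then show "(LINT x:{0..}|lborel. F i x * G i x) = a i * (LINT x:{0..}|lborel. h x)" by simp
  qed
  then show ?thesis by (simp add: sum_distrib_right)
qed

lemma psi0: "psi p 0 = 0" by (simp add: psi_def)

lemma W_struct: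
  fixes N k :: nat and p :: real and Wk :: "nat \<Rightarrow> real \<Rightarrow> real"
  assumes p: "p > 0" and k: "1 \<le> k" "k < N"
    and L2c: "in_L2_Gamma N Wk \<and> ip_Gamma N Wk (Phi p) = 0"
    and sol: "Lminus_solves p N Wk (U p k)"
  shows "\<forall>i<N. \<forall>x\<ge>0. Wk i x = evec k i * psi p x"
proof -
  obtain D1 D2 where H: "\<forall>j<N. H2_half (Wk j) (D1 j) (D2 j)"
    and cont0: "\<forall>j<N. Wk j 0 = Wk 0 0" and eqs: "\<forall>j<N. AE x in lborel. x \<ge> 0 \<longrightarrow>
            - D2 j x + Wk j x - (p + 1) * (phi p x) powr (2 * p) * Wk j x = U p k j x"
    using sol unfolding Lminus_solves_def by blast
  define c where "c = Wk 0 0"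
  have main: "\<forall>x\<ge>0. Wk i x = c * phi p x + evec k i * psi p x" if i: "i < N" for i
  proof -
    define e where "e = evec k i"
    have Hi: "H2_half (Wk i) (D1 i) (D2 i)" using H i by blast
    have mW: "set_borel_measurable lborel {0..} (Wk i)" and W2: "set_integrable lborel {0..} (\<lambda>x. (Wk i x)^2)"
      and mD: "set_borel_measurable lborel {0..} (D1 i)" and D2i: "set_integrable lborel {0..} (\<lambda>x. (D1 i x)^2)"
      and Wder: "\<forall>x\<ge>0. (Wk i has_real_derivative D1 i x) (at x within {0..})"
      and Dint: "\<forall>x\<ge>0. set_integrable lborel {0..x} (D2 i) \<and> D1 i x = D1 i 0 + (LBINT t=0..x. D2 i t)"
      using Hi unfolding H2_half_def L2_half_def by blast+
    define g where "g x = V p x * Wk i x - e * dphi p x" for x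
    have ae: "AE x in lborel. x \<ge> 0 \<longrightarrow> D2 i x = g x"
      using eqs i
    proof -
      have "AE x in lborel. x \<ge> 0 \<longrightarrow>
            - D2 i x + Wk i x - (p + 1) * (phi p x) powr (2 * p) * Wk i x = U p k i x"
        using eqs i by blast
      then show ?thesis
        by eventually_elim (auto simp: g_def U_def deriv_phi[OF p] V_def e_def algebra_simps)
    qed
    have Wc: "continuous_on {0..} (Wk i)"
      unfolding continuous_on_eq_continuous_within using Wder by (auto intro: DERIV_continuous)
    have gc: "continuous_on {0..} g"
      unfolding g_def[abs_def] by (intro continuous_intros Wc V_cont[OF p] dphi_cont[OF p])
    have D1der: "(D1 i has_real_derivative g x) (at x within {0..b})" if "x \<in> {0..b}" for x b
      by (rule H2_classical[OF Dint ae gc that])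
    define d where "d x = Wk i x - psi p x * e" for x
    define d1 where "d1 x = D1 i x - dpsi p x * e" for x
    have dd: "\<forall>x\<ge>0. (d has_real_derivative d1 x) (at x within {0..})"
    proof (intro allI impI)
      fix x :: real assume "x \<ge> 0"
      then have "((\<lambda>x. Wk i x - psi p x * e) has_real_derivative D1 i x - dpsi p x * e) (at x within {0..})"
        using Wder by (intro DERIV_diff DERIV_cmult_right psi_deriv[OF p]) auto
      then show "(d has_real_derivative d1 x) (at x within {0..})" unfolding d_def[abs_def] d1_def .
    qed
    have d1d: "(d1 has_real_derivative V p x * d x) (at x within {0..b})" if x: "x \<in> {0..b}" for x b
    proof -
      have "((\<lambda>x. D1 i x - dpsi p x * e) has_real_derivative g x - ddpsi p x * e) (at x within {0..b})"
        by (intro DERIV_diff DERIV_cmult_right dpsi_deriv[OF p] D1der[OF x])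
      moreover have "g x - ddpsi p x * e = V p x * d x"
        by (simp add: g_def ddpsi_def d_def algebra_simps)
      ultimately show ?thesis unfolding d1_def[abs_def] by simp
    qed
    have cpsi: "continuous_on UNIV (psi p)" by (rule psi_cont[OF p])
    have cdpsi: "continuous_on UNIV (dpsi p)" by (rule dpsi_cont[OF p])
    have one: "\<And>x. \<bar>(\<lambda>_. 1::real) x\<bar> \<le> 1" by simp
    have ee: "\<And>x. \<bar>(\<lambda>_. e) x\<bar> \<le> \<bar>e\<bar>" by simp
    have md: "set_borel_measurable lborel {0..} d"
      unfolding d_def by (intro set_meas_diff mW set_meas_mult_cont cont_set_meas cpsi) auto
    have md1: "set_borel_measurable lborel {0..} d1"
      unfolding d1_def by (intro set_meas_diff mD set_meas_mult_cont cont_set_meas cdpsi) auto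
    have "set_integrable lborel {0..} (\<lambda>x. (Wk i x * 1 - psi p x * e)^2)"
      by (rule comb_L2[OF mW cont_set_meas[OF cpsi] W2 int_psi2[OF p] _ _ one ee]) auto
    then have d2: "set_integrable lborel {0..} (\<lambda>x. (d x)^2)" by (simp add: d_def)
    have "set_integrable lborel {0..} (\<lambda>x. (D1 i x * 1 - dpsi p x * e)^2)"
      by (rule comb_L2[OF mD cont_set_meas[OF cdpsi] D2i int_dpsi2[OF p] _ _ one ee]) auto
    then have d12: "set_integrable lborel {0..} (\<lambda>x. (d1 x)^2)" by (simp add: d1_def)
    have "Wk i 0 = Wk 0 0" using cont0 i by blast
    then have d0: "d 0 = c" by (simp add: d_def psi0 c_def)
    show ?thesis
    proof (intro allI impI)
      fix x :: real assume x: "x \<ge> 0"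
      have "d x = d 0 * phi p x" by (rule kernel[OF p dd d1d md md1 d2 d12 x])
      then have "Wk i x - psi p x * e = c * phi p x" using d0 by (simp add: d_def)
      then show "Wk i x = c * phi p x + evec k i * psi p x" by (simp add: e_def algebra_simps)
    qed
  qed
  have ip: "ip_Gamma N Wk (Phi p) = (\<Sum>i<N. c * (LINT x:{0..}|lborel. phi p x * phi p x) + evec k i * (LINT x:{0..}|lborel. psi p x * phi p x))"
    unfolding ip_Gamma_def
  proof (rule sum.cong[OF refl])
    fix i assume "i \<in> {..<N}"
    then have i: "i < N" by simp
    have "(LINT x:{0..}|lborel. Wk i x * Phi p i x) = (LINT x:{0..}|lborel. c * (phi p x * phi p x) + evec k i * (psi p x * phi p x))"
      using main[OF i] by (intro sint_cong) (simp add: Phi_def algebra_simps)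
    also have "\<dots> = c * (LINT x:{0..}|lborel. phi p x * phi p x) + evec k i * (LINT x:{0..}|lborel. psi p x * phi p x)"
      using int_phi2[OF p] int_psiphi[OF p]
      by (subst set_integral_add(2)) (auto intro: set_integrable_mult_right)
    finally show "(LINT x:{0..}|lborel. Wk i x * Phi p i x) = c * (LINT x:{0..}|lborel. phi p x * phi p x) + evec k i * (LINT x:{0..}|lborel. psi p x * phi p x)" .
  qed
  also have "\<dots> = real N * c * (LINT x:{0..}|lborel. phi p x * phi p x) + (\<Sum>i<N. evec k i) * (LINT x:{0..}|lborel. psi p x * phi p x)"
    by (simp add: sum.distrib sum_distrib_right)
  also have "(\<Sum>i<N. evec k i) = 0" using k by (intro evec_sum) simp
  finally have "real N * c * (LINT x:{0..}|lborel. phi p x * phi p x) = 0" using L2c by simp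
  moreover have "(LINT x:{0..}|lborel. phi p x * phi p x) > 0"
    by (rule pos_int[OF int_phi2[OF p]]) (auto simp: phi_pos)
  moreover have "real N > 0" using k by simp
  ultimately have "c = 0" by simp
  then show ?thesis using main by simp
qed

lemma dphipsi_pos: assumes p: "p > 0" and x: "x > 0" shows "dphi p x * psi p x > 0"
proof -
  have "sinh (p*x) > 0" using p x by simp
  moreover have "cosh (p*x) > 0" by simp
  moreover have "phi p x > 0" by (rule phi_pos)
  ultimately have "x * (sinh (p*x) / cosh (p*x)) * (phi p x * phi p x) / 2 > 0" using x by simp
  moreover have "dphi p x * psi p x = x * (sinh (p*x) / cosh (p*x)) * (phi p x * phi p x) / 2"
    by (simp add: dphi_def psi_def)
  ultimately show ?thesis by simp
qed

lemma dphipsi_nn: assumes p: "p > 0" and x: "x \<ge> 0" shows "dphi p x * psi p x \<ge> 0"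
proof (cases "x = 0")
  case True then show ?thesis by (simp add: psi_def)
next
  case False then have "x > 0" using x by simp
  then show ?thesis using dphipsi_pos[OF p] less_imp_le by blast
qed

theorem lemma5p3:
  fixes N :: nat and p :: real and W :: "nat \<Rightarrow> nat \<Rightarrow> real \<Rightarrow> real"
  assumes "N \<ge> 3" and "p > 0"
    and W_L2c: "\<And>k. k \<in> {1..N-1} \<Longrightarrow> in_L2_Gamma N (W k) \<and> ip_Gamma N (W k) (Phi p) = 0"
    and W_sol: "\<And>k. k \<in> {1..N-1} \<Longrightarrow> Lminus_solves p N (W k) (U p k)"
  shows "(\<forall>j\<in>{1..N-1}. \<forall>k\<in>{1..N-1}. j \<noteq> k \<longrightarrow> ip_Gamma N (U p j) (W k) = 0)
       \<and> (\<forall>j\<in>{1..N-1}. ip_Gamma N (U p j) (W j) > 0)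
       \<and> (\<forall>j\<in>{1..N-1}. \<forall>k\<in>{1..N-1}. j \<noteq> k \<longrightarrow> ip_Gamma N (U p j) (U p k) = 0)
       \<and> (\<forall>j\<in>{1..N-1}. \<forall>k\<in>{1..N-1}. j \<noteq> k \<longrightarrow> ip_Gamma N (W j) (W k) = 0)"
proof -
  have p: "p > 0" using assms(2) .
  have kN: "k < N" "1 \<le> k" if "k \<in> {1..N-1}" for k using that assms(1) by auto
  have WS: "W k i x = evec k i * psi p x" if k: "k \<in> {1..N-1}" and i: "i < N" and x: "x \<ge> 0" for k i x
    using W_struct[OF p kN(2)[OF k] kN(1)[OF k] W_L2c[OF k] W_sol[OF k]] i x by blast
  have Uf: "U p j i x = evec j i * dphi p x" for j i x by (simp add: U_def deriv_phi[OF p])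
  have ipUW: "ip_Gamma N (U p j) (W k) = (\<Sum>i<N. evec j i * evec k i) * (LINT x:{0..}|lborel. dphi p x * psi p x)"
    if "k \<in> {1..N-1}" for j k
    by (rule ip_form) (simp add: Uf WS[OF that] algebra_simps)
  have ipUU: "ip_Gamma N (U p j) (U p k) = (\<Sum>i<N. evec j i * evec k i) * (LINT x:{0..}|lborel. dphi p x * dphi p x)"
    for j k
    by (rule ip_form) (simp add: Uf algebra_simps)
  have ipWW: "ip_Gamma N (W j) (W k) = (\<Sum>i<N. evec j i * evec k i) * (LINT x:{0..}|lborel. psi p x * psi p x)"
    if "j \<in> {1..N-1}" "k \<in> {1..N-1}" for j k
    by (rule ip_form) (simp add: WS[OF that(1)] WS[OF that(2)] algebra_simps)
  have I1: "(LINT x:{0..}|lborel. dphi p x * psi p x) > 0"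
    by (rule pos_int[OF int_dphipsi[OF p]]) (auto intro: dphipsi_nn[OF p] dphipsi_pos[OF p])
  have ne: "(\<Sum>i<N. evec j i * evec k i) = 0" if "j \<in> {1..N-1}" "k \<in> {1..N-1}" "j \<noteq> k" for j k
    using evec_prod_ne[OF that(3) kN(1)[OF that(1)] kN(1)[OF that(2)]] .
  have eq: "(\<Sum>i<N. evec j i * evec j i) > 0" if "j \<in> {1..N-1}" for j
    using evec_prod_eq[OF kN(1)[OF that] kN(2)[OF that]] .
  show ?thesis
    using ipUW ipUU ipWW ne eq I1 by (auto intro!: mult_pos_pos)
qed


end
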